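(* Let $N\ge2$ be an integer, $b>0$, $h=b/N$, and let $A_h=h^2B_h$, where $B_h=(b_{i,j})_{i,j=1}^{N-1}$ is the symmetric Toeplitz matrix with $b_{i,i}=\frac{2N}{3}-1$, $b_{i,j}=\frac N6-1$ if $|i-j|=1$, and $b_{i,j}=-1$ if $|i-j|\ge2$. Let $D_h$ be the diagonal of $A_h$. Then $1\le\lambda_{\max}(D_h^{-1}A_h)<3$.
   Context: $A_h$ is the stiffness matrix of the piecewise linear finite element discretization on the uniform mesh of $(0,b)$ of the nonlocal operator $u\mapsto\int_0^b[u(x)-u(y)]dy$ (constant kernel) with zero exterior condition. *)

theory Defs
  imports "Jordan_Normal_Form.Char_Poly"
begin

definition Bh :: "nat \<Rightarrow> real mat" where
  "Bh N = mat (N - 1) (N - 1) (\<lambda>(i, j).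
     if i = j then 2 * real N / 3 - 1
     else if i = j + 1 \<or> j = i + 1 then real N / 6 - 1
     else -1)"

definition Ah :: "real \<Rightarrow> nat \<Rightarrow> real mat" where
  "Ah b N = ((b / real N)^2) \<cdot>\<^sub>m Bh N"

definition diag_part :: "real mat \<Rightarrow> real mat" where
  "diag_part A = mat_diag (dim_row A) (\<lambda>i. A $$ (i, i))"

definition diag_inv :: "real mat \<Rightarrow> real mat" where
  "diag_inv D = mat_diag (dim_row D) (\<lambda>i. 1 / D $$ (i, i))"

definition lambda_max :: "real mat \<Rightarrow> real" where
  "lambda_max M = Max {l. eigenvalue M l}"

end

theory Submission
  imports Defs "HOL-Analysis.Function_Topology"
begin

lemma quad_expand:
  fixes c :: "nat \<Rightarrow> nat \<Rightarrow> real"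
  assumes sym: "\<And>i j. c i j = c j i"
  shows "(\<Sum>i<n. \<Sum>j<n. c i j * (x i - t * y i) * (x j - t * y j))
     = (\<Sum>i<n. \<Sum>j<n. c i j * x i * x j) - 2 * t * (\<Sum>i<n. \<Sum>j<n. c i j * x j * y i)
       + t^2 * (\<Sum>i<n. \<Sum>j<n. c i j * y i * y j)"
proof -
  have sw: "(\<Sum>i<n. \<Sum>j<n. c i j * y i * x j) = (\<Sum>i<n. \<Sum>j<n. c i j * x j * y i)"
    by (simp add: mult_ac)
  have sw2: "(\<Sum>i<n. \<Sum>j<n. c i j * x i * y j) = (\<Sum>i<n. \<Sum>j<n. c i j * x j * y i)"
    by (subst sum.swap) (simp add: sym mult_ac)
  have "(\<Sum>i<n. \<Sum>j<n. c i j * (x i - t * y i) * (x j - t * y j))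
     = (\<Sum>i<n. \<Sum>j<n. c i j * x i * x j - t * (c i j * x i * y j) - t * (c i j * y i * x j) + t^2 * (c i j * y i * y j))"
    by (intro sum.cong refl) (simp add: algebra_simps power2_eq_square)
  also have "\<dots> = (\<Sum>i<n. \<Sum>j<n. c i j * x i * x j) - t * (\<Sum>i<n. \<Sum>j<n. c i j * x i * y j)
       - t * (\<Sum>i<n. \<Sum>j<n. c i j * y i * x j) + t^2 * (\<Sum>i<n. \<Sum>j<n. c i j * y i * y j)"
    by (simp add: sum.distrib sum_subtractf sum_distrib_left)
  finally show ?thesis using sw sw2 by simp
qed

lemma rayleigh_max:
  fixes c :: "nat \<Rightarrow> nat \<Rightarrow> real" and n :: nat
  assumes n: "n > 0" and sym: "\<And>i j. c i j = c j i"
  shows "\<exists>lam v. (\<Sum>i<n. (v i)^2) = 1 \<and> (\<forall>i<n. (\<Sum>j<n. c i j * v j) = lam * v i)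
     \<and> (\<forall>u. (\<Sum>i<n. \<Sum>j<n. c i j * u i * u j) \<le> lam * (\<Sum>i<n. (u i)^2))"
proof -
  define X where "X = product_topology (\<lambda>_. euclideanreal) {..<n}"
  define q where "q = (\<lambda>v::nat\<Rightarrow>real. \<Sum>i<n. (v i)^2)"
  define f where "f = (\<lambda>v::nat\<Rightarrow>real. \<Sum>i<n. \<Sum>j<n. c i j * v i * v j)"
  define S where "S = {v \<in> topspace X. q v \<in> {1}}"
  have cq: "continuous_map X euclideanreal q"
    unfolding q_def X_def by (intro continuous_intros) auto
  have cf: "continuous_map X euclideanreal f"
    unfolding f_def X_def by (intro continuous_intros) auto
  have cl: "closedin X S" unfolding S_def by (rule closedin_continuous_map_preimage[OF cq]) auto
  have K: "compactin X (PiE {..<n} (\<lambda>_. {-1..1}))"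
    unfolding X_def by (subst compactin_PiE) auto
  have sub: "S \<subseteq> PiE {..<n} (\<lambda>_. {-1..1})"
  proof
    fix v assume "v \<in> S"
    hence v: "v \<in> extensional {..<n}" "q v = 1" unfolding S_def X_def by (auto simp: PiE_iff)
    have "(v i)^2 \<le> 1" if "i < n" for i
    proof -
      have "(v i)^2 \<le> q v" unfolding q_def
        by (rule member_le_sum[where f="\<lambda>i. (v i)^2"]) (use that in auto)
      thus ?thesis using v by simp
    qed
    hence "\<bar>v i\<bar> \<le> 1" if "i < n" for i using that abs_le_square_iff[of "v i" 1] by auto
    thus "v \<in> PiE {..<n} (\<lambda>_. {-1..1})" using v by (auto simp: PiE_iff abs_le_iff)
  qed
  have cS: "compactin X S" by (rule closed_compactin[OF K sub cl])
  define e0 where "e0 = (\<lambda>i::nat. if i = 0 then 1 else if i < n then 0 else (undefined::real))"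
  have "q e0 = (\<Sum>i<n. if i = 0 then 1 else 0)" unfolding q_def e0_def by (intro sum.cong) auto
  hence qe0: "q e0 = 1" using n by simp
  have e0S: "e0 \<in> S" unfolding S_def X_def using qe0 n by (auto simp: e0_def PiE_iff extensional_def)
  have "compact (f ` S)" using image_compactin[OF cS cf] by simp
  moreover have "f ` S \<noteq> {}" using e0S by auto
  ultimately obtain v0 where v0: "v0 \<in> S" and mx: "\<And>v. v \<in> S \<Longrightarrow> f v \<le> f v0"
    using compact_attains_sup[of "f ` S"] by auto
  define lam where "lam = f v0"
  have ray: "f u \<le> lam * q u" for u
  proof (cases "q u = 0")
    case True
    have "\<forall>i\<in>{..<n}. (u i)^2 = 0" using True unfolding q_def
      by (subst sum_nonneg_eq_0_iff[symmetric]) auto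
    hence "f u = 0" unfolding f_def by simp
    thus ?thesis using True by simp
  next
    case False
    have qpos: "q u > 0" using False unfolding q_def by (metis less_eq_real_def sum_nonneg zero_le_power2)
    define s where "s = sqrt (q u)"
    have s: "s > 0" "s^2 = q u" using qpos unfolding s_def by auto
    define w where "w = restrict (\<lambda>i. u i / s) {..<n}"
    have "q w = q u / s^2" unfolding q_def w_def by (simp add: power_divide sum_divide_distrib)
    hence "q w = 1" using s False by simp
    hence "w \<in> S" unfolding S_def X_def w_def by auto
    hence "f w \<le> lam" using mx lam_def by auto
    moreover have "f w = f u / s^2" unfolding f_def w_def
      by (simp add: sum_divide_distrib power2_eq_square)
    ultimately have "f u / q u \<le> lam" using s by simp
    thus ?thesis using qpos by (simp add: divide_le_eq mult.commute)
  qed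
  have qv0: "q v0 = 1" using v0 unfolding S_def by auto
  define r where "r = (\<lambda>i. lam * v0 i - (\<Sum>j<n. c i j * v0 j))"
  define a where "a = (\<Sum>i<n. (r i)^2)"
  have "a = 0"
  proof (rule ccontr)
    assume "a \<noteq> 0"
    hence apos: "a > 0" unfolding a_def by (metis less_eq_real_def sum_nonneg zero_le_power2)
    define G where "G = lam * q r - f r"
    have G: "G \<ge> 0" using ray[of r] unfolding G_def by simp
    define t where "t = a / (G + 1)"
    have t: "t > 0" unfolding t_def using apos G by auto
    have bil: "(\<Sum>i<n. \<Sum>j<n. c i j * v0 j * r i) = lam * (\<Sum>i<n. v0 i * r i) - a"
    proof -
      have "(\<Sum>i<n. \<Sum>j<n. c i j * v0 j * r i) = (\<Sum>i<n. (lam * v0 i - r i) * r i)"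
        unfolding r_def by (simp add: sum_distrib_right)
      also have "\<dots> = lam * (\<Sum>i<n. v0 i * r i) - a"
        unfolding a_def by (simp add: algebra_simps power2_eq_square sum_subtractf sum_distrib_left)
      finally show ?thesis .
    qed
    have qe: "q (\<lambda>i. v0 i - t * r i) = q v0 - 2 * t * (\<Sum>i<n. v0 i * r i) + t^2 * q r"
    proof -
      have "q (\<lambda>i. v0 i - t * r i) = (\<Sum>i<n. (v0 i)^2 - 2 * t * (v0 i * r i) + t^2 * (r i)^2)"
        unfolding q_def by (intro sum.cong refl) (simp add: algebra_simps power2_eq_square)
      thus ?thesis unfolding q_def by (simp add: sum.distrib sum_subtractf sum_distrib_left)
    qed
    have fe: "f (\<lambda>i. v0 i - t * r i) = f v0 - 2 * t * (lam * (\<Sum>i<n. v0 i * r i) - a) + t^2 * f r"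
      unfolding f_def using quad_expand[where c=c and n=n and x=v0 and t=t and y=r, OF sym] bil by simp
    have "f (\<lambda>i. v0 i - t * r i) \<le> lam * q (\<lambda>i. v0 i - t * r i)" by (rule ray)
    hence "f v0 - 2 * t * (lam * (\<Sum>i<n. v0 i * r i) - a) + t^2 * f r \<le>
       lam * (q v0 - 2 * t * (\<Sum>i<n. v0 i * r i) + t^2 * q r)" using qe fe by simp
    hence "2 * t * a \<le> t^2 * G" using qv0 unfolding G_def lam_def by (simp add: algebra_simps)
    hence "2 * a \<le> t * G" using t by (simp add: power2_eq_square)
    hence "2 * a \<le> a * G / (G + 1)" unfolding t_def by simp
    hence "2 * a * (G + 1) \<le> a * G" using G by (simp add: le_divide_eq)
    hence "2 * (a * G) + 2 * a \<le> a * G" by (simp add: algebra_simps)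
    moreover have "0 \<le> a * G" using apos G by simp
    ultimately show False using apos by linarith
  qed
  have "\<forall>i\<in>{..<n}. (r i)^2 = 0" using \<open>a = 0\<close> unfolding a_def
    by (subst sum_nonneg_eq_0_iff[symmetric]) auto
  hence "\<forall>i<n. (\<Sum>j<n. c i j * v0 j) = lam * v0 i" unfolding r_def by auto
  thus ?thesis using qv0 ray unfolding q_def f_def by blast
qed


definition cN :: "nat \<Rightarrow> nat \<Rightarrow> nat \<Rightarrow> real" where
  "cN N i j = (if i = j then 2 * real N / 3 - 1
     else if i = j + 1 \<or> j = i + 1 then real N / 6 - 1 else -1)"

lemma cN_sym: "cN N i j = cN N j i" unfolding cN_def by auto

lemma M_eq:
  assumes N: "N \<ge> 2" and b: "b > 0"
  shows "diag_inv (diag_part (Ah b N)) * Ah b N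
     = mat (N - 1) (N - 1) (\<lambda>(i, j). cN N i j / (2 * real N / 3 - 1))"
proof -
  let ?n = "N - 1"
  define h where "h = (b / real N)^2"
  have h: "h > 0" unfolding h_def using N b by auto
  have d: "2 * real N / 3 - 1 > 0" using N by auto
  have A: "Ah b N = mat ?n ?n (\<lambda>(i, j). h * cN N i j)"
    unfolding Ah_def Bh_def h_def cN_def by (rule eq_matI) auto
  have Ac: "Ah b N \<in> carrier_mat ?n ?n" unfolding A by auto
  have D: "diag_inv (diag_part (Ah b N)) = mat_diag ?n (\<lambda>i. 1 / (h * (2 * real N / 3 - 1)))"
    unfolding diag_inv_def diag_part_def A mat_diag_def
    by (rule eq_matI) (auto simp: cN_def)
  show ?thesis unfolding D mat_diag_mult_left[OF Ac]
    by (rule eq_matI) (use h d in \<open>auto simp: A\<close>)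
qed

lemma eig_iff:
  fixes c :: "nat \<Rightarrow> nat \<Rightarrow> real"
  shows "eigenvalue (mat n n (\<lambda>(i, j). c i j)) l \<longleftrightarrow>
     (\<exists>v. (\<exists>i<n. v i \<noteq> 0) \<and> (\<forall>i<n. (\<Sum>j<n. c i j * v j) = l * v i))"
proof
  assume "eigenvalue (mat n n (\<lambda>(i, j). c i j)) l"
  then obtain w where w: "w \<in> carrier_vec n" "w \<noteq> 0\<^sub>v n" "mat n n (\<lambda>(i, j). c i j) *\<^sub>v w = l \<cdot>\<^sub>v w"
    unfolding eigenvalue_def eigenvector_def by auto
  have "\<exists>i<n. w $ i \<noteq> 0" using w(1,2) by (metis carrier_vecD eq_vecI index_zero_vec)
  moreover have "(\<Sum>j<n. c i j * w $ j) = l * w $ i" if "i < n" for i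
  proof -
    have "(mat n n (\<lambda>(i, j). c i j) *\<^sub>v w) $ i = (l \<cdot>\<^sub>v w) $ i" using w(3) by simp
    thus ?thesis using that w(1) by (simp add: scalar_prod_def row_def lessThan_atLeast0)
  qed
  ultimately show "\<exists>v. (\<exists>i<n. v i \<noteq> 0) \<and> (\<forall>i<n. (\<Sum>j<n. c i j * v j) = l * v i)" by blast
next
  assume "\<exists>v. (\<exists>i<n. v i \<noteq> 0) \<and> (\<forall>i<n. (\<Sum>j<n. c i j * v j) = l * v i)"
  then obtain v where v: "\<exists>i<n. v i \<noteq> 0" "\<And>i. i < n \<Longrightarrow> (\<Sum>j<n. c i j * v j) = l * v i" by blast
  have "vec n v \<noteq> 0\<^sub>v n" using v(1) by (metis index_vec index_zero_vec(1))
  moreover have "mat n n (\<lambda>(i, j). c i j) *\<^sub>v vec n v = l \<cdot>\<^sub>v vec n v"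
    by (rule eq_vecI) (auto simp: scalar_prod_def row_def v(2) simp flip: lessThan_atLeast0)
  ultimately show "eigenvalue (mat n n (\<lambda>(i, j). c i j)) l"
    unfolding eigenvalue_def eigenvector_def by (intro exI[of _ "vec n v"]) auto
qed


lemma deg_le2:
  fixes n i :: nat
  shows "(\<Sum>j<n. if i = j + 1 \<or> j = i + 1 then 1 else 0 :: real) \<le> 2"
proof -
  have "(\<Sum>j<n. if i = j + 1 \<or> j = i + 1 then 1 else 0 :: real)
     \<le> (\<Sum>j<n. (if j = i + 1 then 1 else 0) + (if j = i - 1 then (if i > 0 then 1 else 0) else 0 :: real))"
    by (intro sum_mono) auto
  also have "\<dots> = (if i + 1 < n then 1 else 0) + (if i - 1 < n then (if i > 0 then 1 else 0) else 0)"
    by (simp add: sum.distrib)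
  also have "\<dots> \<le> 2" by auto
  finally show ?thesis .
qed

lemma adj_bound:
  fixes v :: "nat \<Rightarrow> real"
  shows "(\<Sum>i<n. \<Sum>j<n. if i = j + 1 \<or> j = i + 1 then v i * v j else 0) \<le> 2 * (\<Sum>i<n. (v i)^2)"
proof -
  let ?A = "\<lambda>i j. i = j + 1 \<or> j = i + 1"
  have s0: "(\<Sum>i<n. \<Sum>j<n. if ?A i j then v i * v j else 0)
     \<le> (\<Sum>i<n. \<Sum>j<n. (if ?A i j then (v i)^2 else 0) / 2 + (if ?A i j then (v j)^2 else 0) / 2)"
  proof (intro sum_mono)
    fix i j
    have "v i * v j \<le> (v i)^2 / 2 + (v j)^2 / 2"
      using sum_squares_bound[of "v i" "v j"] by (simp add: power2_eq_square field_simps)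
    thus "(if ?A i j then v i * v j else 0) \<le> (if ?A i j then (v i)^2 else 0) / 2 + (if ?A i j then (v j)^2 else 0) / 2"
      by auto
  qed
  have s1: "(\<Sum>i<n. \<Sum>j<n. (if ?A i j then (v i)^2 else 0) / 2 + (if ?A i j then (v j)^2 else 0) / 2)
     = (\<Sum>i<n. \<Sum>j<n. if ?A i j then (v i)^2 else 0) / 2 + (\<Sum>i<n. \<Sum>j<n. if ?A i j then (v j)^2 else 0) / 2"
    by (simp add: sum.distrib sum_divide_distrib)
  have s2: "(\<Sum>i<n. \<Sum>j<n. if ?A i j then (v j)^2 else 0) = (\<Sum>i<n. \<Sum>j<n. if ?A i j then (v i)^2 else 0)"
    by (subst sum.swap) (intro sum.cong refl, auto)
  have s3: "(\<Sum>i<n. \<Sum>j<n. if ?A i j then (v i)^2 else 0) = (\<Sum>i<n. (v i)^2 * (\<Sum>j<n. if ?A i j then 1 else 0))"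
    by (simp add: sum_distrib_left if_distrib cong: if_cong)
  have s4: "(\<Sum>i<n. (v i)^2 * (\<Sum>j<n. if ?A i j then 1 else 0)) \<le> (\<Sum>i<n. (v i)^2 * 2)"
    by (intro sum_mono mult_left_mono deg_le2) auto
  have s5: "(\<Sum>i<n. (v i)^2 * 2) = 2 * (\<Sum>i<n. (v i)^2)" by (simp add: sum_distrib_left mult.commute)
  show ?thesis using s0 s1 s2 s3 s4 s5 by linarith
qed

lemma quad_bound:
  fixes v :: "nat \<Rightarrow> real"
  assumes N: "N \<ge> 2" and nz: "\<exists>i<N-1. v i \<noteq> 0"
  shows "(\<Sum>i<N-1. \<Sum>j<N-1. cN N i j * v i * v j) < 3 * (2 * real N / 3 - 1) * (\<Sum>i<N-1. (v i)^2)"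
proof -
  consider "N = 2" | "N = 3" | "N \<ge> 4" using N by linarith
  then show ?thesis
  proof cases
    case 1
    then show ?thesis using nz by (simp add: cN_def power2_eq_square) (use not_real_square_gt_zero in blast)
  next
    case 2
    have "N - 1 = 2" using 2 by simp
    hence "(\<Sum>i<N-1. \<Sum>j<N-1. cN N i j * v i * v j) = (v 0)^2 + (v 1)^2 - v 0 * v 1"
      "(\<Sum>i<N-1. (v i)^2) = (v 0)^2 + (v 1)^2"
      using 2 by (simp_all add: numeral_2_eq_2 cN_def power2_eq_square algebra_simps)
    moreover have "(v 0)^2 + (v 1)^2 > 0"
    proof -
      obtain k where k: "k < 2" "v k \<noteq> 0" using nz \<open>N - 1 = 2\<close> by auto
      hence "k = 0 \<or> k = 1" by auto
      thus ?thesis using k(2) by (auto intro: add_pos_nonneg add_nonneg_pos)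
    qed
    moreover have "0 \<le> (v 0 + v 1)^2" by simp
    ultimately show ?thesis using 2 by (simp add: power2_eq_square algebra_simps)
  next
    case 3
    let ?n = "N - 1"
    let ?A = "\<lambda>i j. i = j + 1 \<or> j = i + 1"
    define q where "q = (\<Sum>i<?n. (v i)^2)"
    have qpos: "q > 0" unfolding q_def using nz
      by (metis (no_types, lifting) finite_lessThan lessThan_iff power_zero_numeral sum_pos2 zero_le_power2 zero_less_power2)
    have dec: "cN N i j * v i * v j = - (v i * v j) + (2 * real N / 3) * (if i = j then v i * v j else 0)
        + (real N / 6) * (if ?A i j then v i * v j else 0)" for i j
      unfolding cN_def by (auto simp: algebra_simps)
    have "(\<Sum>i<?n. \<Sum>j<?n. cN N i j * v i * v j) = - (\<Sum>i<?n. \<Sum>j<?n. v i * v j)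
       + (2 * real N / 3) * (\<Sum>i<?n. \<Sum>j<?n. if i = j then v i * v j else 0)
       + (real N / 6) * (\<Sum>i<?n. \<Sum>j<?n. if ?A i j then v i * v j else 0)"
    proof -
      have "(\<Sum>i<?n. \<Sum>j<?n. cN N i j * v i * v j) = (\<Sum>i<?n. \<Sum>j<?n. - (v i * v j))
        + (\<Sum>i<?n. \<Sum>j<?n. (2 * real N / 3) * (if i = j then v i * v j else 0))
        + (\<Sum>i<?n. \<Sum>j<?n. (real N / 6) * (if ?A i j then v i * v j else 0))"
        unfolding dec by (simp only: sum.distrib)
      thus ?thesis by (simp only: sum_distrib_left[symmetric] sum_negf)
    qed
    also have "(\<Sum>i<?n. \<Sum>j<?n. v i * v j) = (\<Sum>i<?n. v i)^2"
      by (simp add: power2_eq_square sum_product)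
    also have "(\<Sum>i<?n. \<Sum>j<?n. if i = j then v i * v j else 0) = q"
      unfolding q_def by (simp add: power2_eq_square)
    finally have "(\<Sum>i<?n. \<Sum>j<?n. cN N i j * v i * v j) \<le> (2 * real N / 3) * q + (real N / 6) * (2 * q)"
      using adj_bound[where n="?n" and v=v] unfolding q_def[symmetric]
      by (smt (verit, best) mult_left_mono of_nat_0_le_iff divide_nonneg_pos zero_le_power2)
    also have "\<dots> = real N * q" by (simp add: algebra_simps)
    also have "\<dots> < 3 * (2 * real N / 3 - 1) * q" using 3 qpos by (simp add: algebra_simps)
    finally show ?thesis unfolding q_def .
  qed
qed


theorem lemma4p3:
  fixes N :: nat and b :: real
  assumes "N \<ge> 2" and "b > 0"
  shows "1 \<le> lambda_max (diag_inv (diag_part (Ah b N)) * Ah b N)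
       \<and> lambda_max (diag_inv (diag_part (Ah b N)) * Ah b N) < 3"
proof -
  let ?n = "N - 1"
  define d where "d = 2 * real N / 3 - 1"
  have d: "d > 0" unfolding d_def using assms(1) by auto
  define M where "M = diag_inv (diag_part (Ah b N)) * Ah b N"
  have Meq: "M = mat ?n ?n (\<lambda>(i, j). (\<lambda>i j. cN N i j / d) i j)"
    unfolding M_def d_def using M_eq[OF assms] by simp
  have Mc: "M \<in> carrier_mat ?n ?n" unfolding Meq by auto
  define E where "E = {l. eigenvalue M l}"
  have cp: "char_poly M \<noteq> 0" using degree_monic_char_poly[OF Mc] by auto
  have "E \<subseteq> {l. poly (char_poly M) l = 0}"
    unfolding E_def using eigenvalue_root_char_poly[OF Mc] by auto
  hence finE: "finite E" using poly_roots_finite[OF cp] finite_subset by blast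
  have eigE: "l \<in> E \<longleftrightarrow> (\<exists>v. (\<exists>i<?n. v i \<noteq> 0) \<and> (\<forall>i<?n. (\<Sum>j<?n. cN N i j / d * v j) = l * v i))" for l
    unfolding E_def Meq mem_Collect_eq by (rule eig_iff[where c="\<lambda>i j. cN N i j / d"])
  have n: "?n > 0" using assms(1) by auto
  obtain lam v where v1: "(\<Sum>i<?n. (v i)^2) = 1"
    and ev: "\<forall>i<?n. (\<Sum>j<?n. cN N i j * v j) = lam * v i"
    and ray: "\<forall>u. (\<Sum>i<?n. \<Sum>j<?n. cN N i j * u i * u j) \<le> lam * (\<Sum>i<?n. (u i)^2)"
    using rayleigh_max[OF n, of "cN N"] cN_sym by blast
  define e where "e = (\<lambda>i::nat. if i = 0 then 1 else (0::real))"
  have inner: "(\<Sum>j<?n. cN N i j * e i * e j) = (if i = 0 then cN N 0 0 else 0)" for i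
  proof -
    have "(\<Sum>j<?n. cN N i j * e i * e j) = (\<Sum>j<?n. if j = 0 then cN N i 0 * e i else 0)"
      by (intro sum.cong refl) (auto simp: e_def)
    also have "\<dots> = cN N i 0 * e i" using n by simp
    finally show ?thesis by (simp add: e_def)
  qed
  have Qe: "(\<Sum>i<?n. \<Sum>j<?n. cN N i j * e i * e j) = cN N 0 0" unfolding inner using n by simp
  have qe': "(\<Sum>i<?n. (e i)^2) = (\<Sum>i<?n. if i = 0 then 1 else 0)"
    by (intro sum.cong refl) (simp add: e_def)
  have qe: "(\<Sum>i<?n. (e i)^2) = 1" unfolding qe' using n by simp
  have "cN N 0 0 \<le> lam * 1" using ray[rule_format, of e] unfolding Qe qe .
  hence lamd: "lam \<ge> d" by (simp add: cN_def d_def)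
  have "\<exists>i<?n. v i \<noteq> 0"
  proof (rule ccontr)
    assume "\<not> ?thesis"
    hence "(\<Sum>i<?n. (v i)^2) = 0" by simp
    thus False using v1 by simp
  qed
  moreover have "\<forall>i<?n. (\<Sum>j<?n. cN N i j / d * v j) = lam / d * v i"
  proof (intro allI impI)
    fix i assume "i < ?n"
    hence "(\<Sum>j<?n. cN N i j * v j) / d = lam * v i / d" using ev by simp
    thus "(\<Sum>j<?n. cN N i j / d * v j) = lam / d * v i" by (simp add: sum_divide_distrib)
  qed
  ultimately have inE: "lam / d \<in> E" unfolding eigE by blast
  have ge1: "1 \<le> lam / d" using lamd d by simp
  have ub: "l < 3" if "l \<in> E" for l
  proof -
    from that[unfolded eigE] obtain w where w: "\<exists>i<?n. w i \<noteq> 0" and we: "\<forall>i<?n. (\<Sum>j<?n. cN N i j / d * w j) = l * w i"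
      by blast
    define q where "q = (\<Sum>i<?n. (w i)^2)"
    have qpos: "q > 0"
    proof -
      obtain k where k: "k < ?n" "w k \<noteq> 0" using w by blast
      have "(w k)^2 \<le> q" unfolding q_def
        by (rule member_le_sum[where f="\<lambda>i. (w i)^2"]) (use k in auto)
      moreover have "(w k)^2 > 0" using k by simp
      ultimately show ?thesis by linarith
    qed
    have "(\<Sum>i<?n. \<Sum>j<?n. cN N i j * w i * w j) = (\<Sum>i<?n. w i * (\<Sum>j<?n. cN N i j * w j))"
      by (simp add: sum_distrib_left mult_ac)
    also have "\<dots> = (\<Sum>i<?n. w i * (d * (l * w i)))"
    proof (intro sum.cong refl)
      fix i assume "i \<in> {..<?n}"
      hence "(\<Sum>j<?n. cN N i j / d * w j) = l * w i" using we by auto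
      hence "(\<Sum>j<?n. cN N i j * w j) / d = l * w i" by (simp add: sum_divide_distrib)
      hence "(\<Sum>j<?n. cN N i j * w j) = d * (l * w i)" using d by (simp add: field_simps)
      thus "w i * (\<Sum>j<?n. cN N i j * w j) = w i * (d * (l * w i))" by simp
    qed
    also have "\<dots> = (\<Sum>i<?n. (d * l) * (w i)^2)"
      by (intro sum.cong refl) (simp add: power2_eq_square)
    also have "\<dots> = d * l * q" unfolding q_def by (rule sum_distrib_left[symmetric])
    finally have "d * l * q < 3 * d * q" using quad_bound[OF assms(1) w] unfolding q_def d_def by simp
    hence "d * (l * q) < d * (3 * q)" by (simp add: mult_ac)
    hence "l * q < 3 * q" using d by simp
    thus ?thesis using qpos by simp
  qed
  have ne: "E \<noteq> {}" using inE by auto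
  have "lam / d \<le> Max E" using Max_ge[OF finE inE] .
  moreover have "Max E < 3" using ub Max_in[OF finE ne] by blast
  ultimately show ?thesis using ge1 unfolding lambda_max_def M_def[symmetric] E_def[symmetric] by simp
qed

end
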